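(* Let $(M,d)$ be a metric space and $Y\subseteq M$. Let $\mathcal{N}$ be a $\sigma$-algebra of subsets of $Y$ containing all Borel subsets of $Y$, and let $\nu$ be a measure on $\mathcal{N}$ such that $\nu(B(x,r)\cap Y)<+\infty$ for all $x\in Y$, $r>0$. Let $\upsilon_Y\in]0,+\infty[$ and assume that $Y$ is upper $\upsilon_Y$-Ahlfors regular with respect to $Y$, with constants $r_0\in]0,+\infty]$, $c_0$ as in the definition, and that $\nu(Y)<+\infty$ whenever $r_0<+\infty$. Let $s_1,s_2\in[0,\upsilon_Y[$ and $a\in]0,+\infty[$. Then there exists $c\in]0,+\infty[$ such that \[ \int_{Y\cap B(\xi,a\,d(x',x''))}\frac{d\nu(\eta)}{d(\xi,\eta)^{s_1}d(\eta,y)^{s_2}} \leq c\left(d(x',y)^{-s_2}d(x',x'')^{\upsilon_Y-s_1}+d(x',y)^{-s_1}d(x',x'')^{\upsilon_Y-s_2}\right) \] for all $x',x''\in Y$ with $x'\neq x''$, all $\xi\in\{x',x''\}$ and all $y\in Y\setminus B(x',2d(x',x''))$.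
   Context: For $\xi\in M$, $r>0$, $B(\xi,r)=\{\eta\in M: d(\xi,\eta)<r\}$. $Y$ is upper $\upsilon$-Ahlfors regular with respect to $Y$ if there exist $r_0\in]0,+\infty]$, $c_0\in]0,+\infty[$ with $\nu(B(x,r)\cap Y)\leq c_0r^{\upsilon}$ for all $x\in Y$, $r\in]0,r_0[$. *)

theory Defs
  imports "HOL-Analysis.Analysis"
begin

text \<open>Real power with the convention t^0 = 1 (also for t = 0), and t^s = t powr s for s \<noteq> 0
  (so 0^s = 0 for s > 0).\<close>
definition rpow0 :: "real \<Rightarrow> real \<Rightarrow> real" where
  "rpow0 t s = (if s = 0 then 1 else t powr s)"

text \<open>The integrand 1/(d(xi,eta)^s1 d(eta,y)^s2) as an extended nonnegative real
  (1/0 = \<infinity>).\<close>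
definition kernel :: "'a::metric_space \<Rightarrow> 'a \<Rightarrow> real \<Rightarrow> real \<Rightarrow> 'a \<Rightarrow> ennreal" where
  "kernel xi y s1 s2 eta = inverse (ennreal (rpow0 (dist xi eta) s1 * rpow0 (dist eta y) s2))"

definition upper_ahlfors_regular ::
  "'a::metric_space measure \<Rightarrow> 'a set \<Rightarrow> real \<Rightarrow> ereal \<Rightarrow> real \<Rightarrow> bool" where
  "upper_ahlfors_regular \<nu> Y v r0 c0 \<longleftrightarrow> 0 < r0 \<and> 0 < c0 \<and>
     (\<forall>x\<in>Y. \<forall>r. 0 < r \<and> ereal r < r0 \<longrightarrow> emeasure \<nu> (ball x r \<inter> Y) \<le> ennreal (c0 * r powr v))"

end

theory Submission
  imports Defs
begin



lemma rpow0_meas: "(\<lambda>\<eta>::'a::metric_space. inverse (ennreal (rpow0 (dist x \<eta>) s))) \<in> borel_measurable borel"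
proof -
  have d: "(\<lambda>\<eta>::'a. dist x \<eta>) \<in> borel_measurable borel"
    by (intro borel_measurable_continuous_onI continuous_intros)
  show ?thesis
  proof (cases "s = 0")
    case True thus ?thesis by (simp add: rpow0_def)
  next
    case False thus ?thesis unfolding rpow0_def using d by simp measurable
  qed
qed

lemma open_in_sets:
  assumes space: "space \<nu> = Y" and bs: "sets (restrict_space borel Y) \<subseteq> sets \<nu>" and "open U"
  shows "U \<inter> Y \<in> sets \<nu>"
proof -
  have "Y \<inter> U \<in> sets (restrict_space borel Y)" unfolding sets_restrict_space using assms(3) by auto
  thus ?thesis using bs by (auto simp: Int_commute)
qed

lemma borel_to_nu:
  assumes space: "space \<nu> = Y" and bs: "sets (restrict_space borel Y) \<subseteq> sets \<nu>"
    and f: "f \<in> borel_measurable borel"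
  shows "f \<in> borel_measurable \<nu>"
proof -
  have "f \<in> borel_measurable (restrict_space borel Y)" using f by (rule measurable_restrict_space1)
  moreover have "measurable (restrict_space borel Y) borel \<subseteq> measurable \<nu> borel"
    by (rule measurable_mono) (use bs space in \<open>auto simp: space_restrict_space\<close>)
  ultimately show ?thesis by auto
qed

lemma Ahlfors_global:
  fixes \<nu> :: "'a::metric_space measure"
  assumes space: "space \<nu> = Y"
    and AR: "upper_ahlfors_regular \<nu> Y v r0 c0"
    and fin_Y: "r0 < \<infinity> \<Longrightarrow> emeasure \<nu> Y < \<infinity>" and v: "0 < v"
  shows "\<exists>C>0. \<forall>x\<in>Y. \<forall>r>0. emeasure \<nu> (ball x r \<inter> Y) \<le> ennreal (C * r powr v)"
proof (cases "r0 < \<infinity>")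
  case False
  hence "r0 = \<infinity>" by (simp add: top.not_eq_extremum)
  then show ?thesis using AR unfolding upper_ahlfors_regular_def by (intro exI[of _ c0]) auto
next
  case True
  from AR have r0pos: "0 < r0" and c0: "0 < c0" unfolding upper_ahlfors_regular_def by auto
  then obtain R0 where R0: "r0 = ereal R0" "0 < R0" using True
    by (cases r0) auto
  from fin_Y[OF True] obtain M where M: "emeasure \<nu> Y = ennreal M" "0 \<le> M"
    by (metis ennreal_cases less_irrefl top_unique le_less ennreal_less_top)
  define C where "C = c0 + M / R0 powr v"
  have Cpos: "C > 0" unfolding C_def using c0 M R0 by (auto intro!: add_pos_nonneg)
  show ?thesis
  proof (intro exI[of _ C] conjI Cpos ballI allI impI)
    fix x r assume x: "x \<in> Y" and r: "(0::real) < r"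
    show "emeasure \<nu> (ball x r \<inter> Y) \<le> ennreal (C * r powr v)"
    proof (cases "r < R0")
      case True
      hence "emeasure \<nu> (ball x r \<inter> Y) \<le> ennreal (c0 * r powr v)"
        using AR x r R0 unfolding upper_ahlfors_regular_def by auto
      also have "\<dots> \<le> ennreal (C * r powr v)"
        unfolding C_def using M R0 by (intro ennreal_leI mult_right_mono) auto
      finally show ?thesis .
    next
      case False
      have "emeasure \<nu> (ball x r \<inter> Y) \<le> emeasure \<nu> Y"
        by (rule emeasure_mono) (auto simp flip: space)
      also have "\<dots> = ennreal (M / R0 powr v * R0 powr v)" using M R0 by simp
      also have "\<dots> \<le> ennreal (C * r powr v)"
        unfolding C_def using M R0 False c0 r v
        by (intro ennreal_leI mult_mono powr_mono2) auto
      finally show ?thesis .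
    qed
  qed
qed


lemma powr_identity:
  fixes R s v :: real assumes R: "R > 0"
  shows "(R / 2^Suc k) powr (-s) * (R / 2^k) powr v = 2 powr s * R powr (v - s) * (2 powr (s - v))^k"
proof -
  have e1: "(2::real)^Suc k = 2 powr (real k + 1)" by (simp add: powr_add powr_realpow)
  have e2: "(2::real)^k = 2 powr (real k)" by (simp add: powr_realpow)
  have e3: "(2 powr (s - v))^k = (2::real) powr ((s - v) * real k)"
    by (simp add: powr_realpow[symmetric] powr_powr)
  show ?thesis unfolding e1 e2 e3 using R
    by (simp add: powr_divide powr_powr powr_minus_divide powr_add powr_diff powr_mult field_simps ring_distribs)
qed

lemma rpow0_ge: "0 \<le> s \<Longrightarrow> 0 < u \<Longrightarrow> u \<le> t \<Longrightarrow> u powr s \<le> rpow0 t s"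
  unfolding rpow0_def by (auto intro: powr_mono2)

lemma rpow0_nonneg: "0 \<le> rpow0 t s"
  unfolding rpow0_def by auto


lemma ball_integral:
  fixes \<nu> :: "'a::metric_space measure"
  assumes space: "space \<nu> = Y" and bs: "sets (restrict_space borel Y) \<subseteq> sets \<nu>"
    and C1: "C1 > 0" and AG: "\<forall>x\<in>Y. \<forall>r>0. emeasure \<nu> (ball x r \<inter> Y) \<le> ennreal (C1 * r powr v)"
    and s: "0 \<le> s" "s < v" and x: "x \<in> Y" and R: "R > 0"
  shows "(\<integral>\<^sup>+\<eta>\<in>(Y \<inter> ball x R). inverse (ennreal (rpow0 (dist x \<eta>) s)) \<partial>\<nu>)
           \<le> ennreal (C1 * 2 powr s / (1 - 2 powr (s - v)) * R powr (v - s))"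
proof -
  define b where "b k = (R / 2^Suc k) powr (-s)" for k :: nat
  define g where "g k \<eta> = ennreal (b k) * indicator (ball x (R/2^k) \<inter> Y) \<eta>" for k \<eta>
  define q where "q = (2::real) powr (s - v)"
  have "(2::real) powr (s - v) < 2 powr 0" by (rule powr_less_mono) (use s in auto)
  hence q: "0 < q" "q < 1" unfolding q_def by auto
  have bpos: "b k > 0" for k unfolding b_def using R by simp
  have point: "inverse (ennreal (rpow0 (dist x \<eta>) s)) * indicator (Y \<inter> ball x R) \<eta> \<le> (\<Sum>k. g k \<eta>)" for \<eta>
  proof (cases "\<eta> \<in> Y \<inter> ball x R")
    case False thus ?thesis by simp
  next
    case inR: True
    show ?thesis
    proof (cases "\<eta> = x")
      case True
      have gx: "g k \<eta> = ennreal (b k)" for k unfolding g_def using True R x by simp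
      have "(\<Sum>k. ennreal (b k)) = top"
      proof (rule ccontr)
        assume "(\<Sum>k. ennreal (b k)) \<noteq> top"
        hence "summable b" using bpos by (intro summable_suminf_not_top) (auto intro: less_imp_le)
        hence lim: "b \<longlonglongrightarrow> 0" by (rule summable_LIMSEQ_zero)
        have "b k \<ge> (R/2) powr (-s)" for k
        proof -
          have "(2::real) \<le> 2^Suc k" by (simp add: self_le_power)
          hence "R / 2^Suc k \<le> R / 2" using R by (intro divide_left_mono) auto
          thus ?thesis unfolding b_def using R s by (intro powr_mono2') auto
        qed
        hence "(R/2) powr (-s) \<le> 0" by (intro LIMSEQ_le_const[OF lim]) auto
        thus False using R by simp
      qed
      then show ?thesis using gx by simp
    next
      case False
      define d where "d = dist x \<eta>"
      have d: "0 < d" "d < R" using False inR by (auto simp: d_def)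
      obtain n :: nat where n: "R / d < 2^n" using real_arch_pow[of 2 "R/d"] by auto
      have P: "R / 2^n \<le> d" using n d by (simp add: field_simps)
      define m where "m = (LEAST m::nat. R / 2^m \<le> d)"
      have m1: "R / 2^m \<le> d" unfolding m_def by (rule LeastI[of _ n]) (rule P)
      have m2: "d < R / 2^j" if "j < m" for j
        using not_less_Least[OF that[unfolded m_def]] by simp
      have "m \<noteq> 0" using m1 d by (intro notI) auto
      then obtain k where k: "m = Suc k" by (cases m) auto
      have dk1: "R / 2^Suc k \<le> d" using m1 k by simp
      have dk2: "d < R / 2^k" using m2[of k] k by simp
      define u where "u = R / 2^Suc k"
      have u: "0 < u" "u \<le> d" using R dk1 by (auto simp: u_def)
      have r: "u powr s \<le> rpow0 d s" by (rule rpow0_ge) (use s u in auto)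
      have upos: "0 < u powr s" using u by simp
      have "inverse (ennreal (rpow0 d s)) = ennreal (inverse (rpow0 d s))"
        by (intro inverse_ennreal less_le_trans[OF upos r])
      also have "\<dots> \<le> ennreal (inverse (u powr s))"
        using r upos by (intro ennreal_leI le_imp_inverse_le) auto
      also have "\<dots> = ennreal (b k)" unfolding b_def u_def by (simp add: powr_minus)
      also have "\<dots> = g k \<eta>" unfolding g_def using dk2 inR by (simp add: d_def)
      also have "\<dots> \<le> (\<Sum>k. g k \<eta>)" using sum_le_suminf[of "\<lambda>k. g k \<eta>" "{k}"] by simp
      finally show ?thesis using inR x by (simp add: d_def)
    qed
  qed
  have Sk: "ball x (R/2^k) \<inter> Y \<in> sets \<nu>" for k by (rule open_in_sets[OF space bs]) auto
  have gm: "g k \<in> borel_measurable \<nu>" for k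
    unfolding g_def by (intro borel_measurable_times_ennreal borel_measurable_const borel_measurable_indicator Sk)
  have bound: "ennreal (b k) * emeasure \<nu> (ball x (R/2^k) \<inter> Y) \<le> ennreal (C1 * 2 powr s * R powr (v - s) * q^k)" for k
  proof -
    have "ennreal (b k) * emeasure \<nu> (ball x (R/2^k) \<inter> Y) \<le> ennreal (b k) * ennreal (C1 * (R/2^k) powr v)"
      using AG x R by (intro mult_left_mono) auto
    also have "\<dots> = ennreal (C1 * (b k * (R/2^k) powr v))"
      using bpos[of k] C1 by (simp add: ennreal_mult[symmetric] mult.commute mult.left_commute)
    also have "\<dots> = ennreal (C1 * 2 powr s * R powr (v - s) * q^k)"
      unfolding b_def q_def powr_identity[OF R] by (simp add: mult.assoc)
    finally show ?thesis .
  qed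
  have summ: "summable (\<lambda>k. C1 * 2 powr s * R powr (v - s) * q^k)"
    using q by (intro summable_mult summable_geometric) auto
  have "(\<integral>\<^sup>+\<eta>\<in>(Y \<inter> ball x R). inverse (ennreal (rpow0 (dist x \<eta>) s)) \<partial>\<nu>) \<le> (\<integral>\<^sup>+\<eta>. (\<Sum>k. g k \<eta>) \<partial>\<nu>)"
    by (intro nn_integral_mono point)
  also have "\<dots> = (\<Sum>k. integral\<^sup>N \<nu> (g k))" by (rule nn_integral_suminf[OF gm])
  also have "\<dots> = (\<Sum>k. ennreal (b k) * emeasure \<nu> (ball x (R/2^k) \<inter> Y))"
    unfolding g_def by (simp add: nn_integral_cmult_indicator Sk)
  also have "\<dots> \<le> (\<Sum>k. ennreal (C1 * 2 powr s * R powr (v - s) * q^k))"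
    by (intro suminf_le bound) auto
  also have "\<dots> = ennreal (\<Sum>k. C1 * 2 powr s * R powr (v - s) * q^k)"
    using C1 q summ by (intro suminf_ennreal2) auto
  also have "(\<Sum>k. C1 * 2 powr s * R powr (v - s) * q^k) = C1 * 2 powr s * R powr (v - s) * (1 / (1 - q))"
    using q by (subst suminf_mult) (auto simp: suminf_geometric)
  also have "\<dots> = C1 * 2 powr s / (1 - 2 powr (s - v)) * R powr (v - s)"
    unfolding q_def by simp
  finally show ?thesis .
qed


lemma inv_split:
  assumes A: "0 \<le> A" and m: "0 < m" "m \<le> B"
  shows "inverse (ennreal (A * B)) \<le> ennreal (inverse m) * inverse (ennreal A)"
proof (cases "A = 0")
  case True
  then show ?thesis using m by (simp add: ennreal_mult_top)
next
  case False
  hence A': "0 < A" using A by auto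
  have "inverse (ennreal (A * B)) = ennreal (inverse (A * B))"
    using A' m by (intro inverse_ennreal) auto
  also have "\<dots> \<le> ennreal (inverse m * inverse A)"
    using A' m by (intro ennreal_leI) (auto simp: field_simps)
  also have "\<dots> = ennreal (inverse m) * inverse (ennreal A)"
    using A' m by (simp add: ennreal_mult inverse_ennreal)
  finally show ?thesis .
qed


lemma sum_le_aux: "0 \<le> c1 \<Longrightarrow> 0 \<le> c2 \<Longrightarrow> 0 \<le> X1 \<Longrightarrow> 0 \<le> X2 \<Longrightarrow> c1*X1 + c2*X2 \<le> (c1+c2)*(X1+X2::real)"
  using mult_nonneg_nonneg[of c1 X2] mult_nonneg_nonneg[of c2 X1] by (simp add: ring_distribs)

theorem lemma4p5:
  fixes \<nu> :: "'a::metric_space measure" and Y :: "'a set"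
    and vY :: real and r0 :: ereal and c0 :: real and s1 s2 a :: real
  assumes space: "space \<nu> = Y"
    and borel_sets: "sets (restrict_space borel Y) \<subseteq> sets \<nu>"
    and ball_fin: "\<And>x r. x \<in> Y \<Longrightarrow> 0 < r \<Longrightarrow> emeasure \<nu> (ball x r \<inter> Y) < \<infinity>"
    and vY_pos: "0 < vY"
    and AR: "upper_ahlfors_regular \<nu> Y vY r0 c0"
    and fin_Y: "r0 < \<infinity> \<Longrightarrow> emeasure \<nu> Y < \<infinity>"
    and s1: "0 \<le> s1" "s1 < vY"
    and s2: "0 \<le> s2" "s2 < vY"
    and a_pos: "0 < a"
  shows "\<exists>c>0. \<forall>x'\<in>Y. \<forall>x''\<in>Y. x' \<noteq> x'' \<longrightarrow>
           (\<forall>\<xi>\<in>{x', x''}. \<forall>y\<in>Y - ball x' (2 * dist x' x'').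
              (\<integral>\<^sup>+ \<eta>\<in>(Y \<inter> ball \<xi> (a * dist x' x'')). kernel \<xi> y s1 s2 \<eta> \<partial>\<nu>)
              \<le> ennreal (c * (dist x' y powr (- s2) * dist x' x'' powr (vY - s1)
                             + dist x' y powr (- s1) * dist x' x'' powr (vY - s2))))"
proof -
  obtain C1 where C1: "C1 > 0" and AG: "\<forall>x\<in>Y. \<forall>r>0. emeasure \<nu> (ball x r \<inter> Y) \<le> ennreal (C1 * r powr vY)"
    using Ahlfors_global[OF space AR fin_Y vY_pos] by blast
  define Kf where "Kf s = C1 * 2 powr s / (1 - 2 powr (s - vY))" for s
  have Kf_pos: "Kf s > 0" if "s < vY" for s
  proof -
    have "(2::real) powr (s - vY) < 2 powr 0" by (rule powr_less_mono) (use that in auto)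
    thus ?thesis unfolding Kf_def using C1 by auto
  qed
  have BI: "(\<integral>\<^sup>+\<eta>\<in>(Y \<inter> ball x R). inverse (ennreal (rpow0 (dist x \<eta>) s)) \<partial>\<nu>) \<le> ennreal (Kf s * R powr (vY - s))"
    if "0 \<le> s" "s < vY" "x \<in> Y" "R > 0" for s x R
    unfolding Kf_def by (rule ball_integral[OF space borel_sets C1 AG that])
  define c1 where "c1 = Kf s1 * 4 powr s2 * a powr (vY - s1)"
  define c2 where "c2 = Kf s2 * 4 powr s1 * a powr (vY - s2)"
  have c1: "c1 > 0" unfolding c1_def using Kf_pos s1 a_pos by auto
  have c2: "c2 > 0" unfolding c2_def using Kf_pos s2 a_pos by auto
  show ?thesis
  proof (intro exI[of _ "c1 + c2"] conjI ballI impI)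
    show "0 < c1 + c2" using c1 c2 by simp
    fix x' x'' \<xi> y assume x': "x' \<in> Y" and x'': "x'' \<in> Y" and ne: "x' \<noteq> x''" and \<xi>: "\<xi> \<in> {x', x''}"
      and y: "y \<in> Y - ball x' (2 * dist x' x'')"
    define D where "D = dist x' x''"
    define L where "L = dist x' y"
    define \<rho> where "\<rho> = dist \<xi> y"
    have D: "0 < D" using ne by (simp add: D_def)
    have L: "2 * D \<le> L" using y by (simp add: L_def D_def)
    have \<xi>Y: "\<xi> \<in> Y" using \<xi> x' x'' by auto
    have yY: "y \<in> Y" using y by auto
    have dx\<xi>: "dist x' \<xi> \<le> D" using \<xi> by (auto simp: D_def)
    have "L \<le> dist x' \<xi> + \<rho>" unfolding L_def \<rho>_def by (rule dist_triangle)
    hence \<rho>L: "L / 2 \<le> \<rho>" using dx\<xi> L by linarith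
    have \<rho>pos: "0 < \<rho>" using \<rho>L L D by linarith
    define m where "m = min (\<rho>/2) (a * D)"
    have m: "0 < m" "m \<le> a * D" using \<rho>pos a_pos D by (auto simp: m_def)
    define S where "S = Y \<inter> ball \<xi> (a * D)"
    define g1 where "g1 \<eta> = inverse (ennreal (rpow0 (dist \<xi> \<eta>) s1))" for \<eta>
    define g2 where "g2 \<eta> = inverse (ennreal (rpow0 (dist y \<eta>) s2))" for \<eta>
    define k1 where "k1 = (\<rho>/2) powr (-s2)"
    define k2 where "k2 = (\<rho>/2) powr (-s1)"
    define f1 where "f1 \<eta> = ennreal k1 * (g1 \<eta> * indicator S \<eta>)" for \<eta>
    define f2 where "f2 \<eta> = ennreal k2 * (g2 \<eta> * indicator (Y \<inter> ball y m) \<eta>)" for \<eta>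
    have point: "kernel \<xi> y s1 s2 \<eta> * indicator S \<eta> \<le> f1 \<eta> + f2 \<eta>" for \<eta>
    proof (cases "\<eta> \<in> S")
      case False thus ?thesis by simp
    next
      case True
      hence \<eta>: "\<eta> \<in> Y" "dist \<xi> \<eta> < a * D" by (auto simp: S_def)
      have tri: "\<rho> \<le> dist \<xi> \<eta> + dist \<eta> y" unfolding \<rho>_def by (rule dist_triangle)
      show ?thesis
      proof (cases "\<rho>/2 \<le> dist \<eta> y")
        case True
        have "kernel \<xi> y s1 s2 \<eta> \<le> ennreal (inverse ((\<rho>/2) powr s2)) * g1 \<eta>"
          unfolding kernel_def g1_def
          by (rule inv_split[OF rpow0_nonneg]) (use \<rho>pos True s2 in \<open>auto intro: rpow0_ge\<close>)
        also have "\<dots> = f1 \<eta>" unfolding f1_def k1_def using \<open>\<eta> \<in> S\<close> by (simp add: powr_minus)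
        finally show ?thesis using \<open>\<eta> \<in> S\<close> by (simp add: add_increasing2)
      next
        case False
        have far: "\<rho>/2 \<le> dist \<xi> \<eta>" using False tri by linarith
        have inm: "\<eta> \<in> Y \<inter> ball y m" using False tri \<eta> by (auto simp: m_def dist_commute)
        have "kernel \<xi> y s1 s2 \<eta> = inverse (ennreal (rpow0 (dist y \<eta>) s2 * rpow0 (dist \<xi> \<eta>) s1))"
          unfolding kernel_def by (simp add: dist_commute mult.commute)
        also have "\<dots> \<le> ennreal (inverse ((\<rho>/2) powr s1)) * g2 \<eta>"
          unfolding g2_def
          by (rule inv_split[OF rpow0_nonneg]) (use \<rho>pos far s1 in \<open>auto intro: rpow0_ge\<close>)
        also have "\<dots> = f2 \<eta>" unfolding f2_def k2_def using inm by (simp add: powr_minus)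
        finally show ?thesis using \<open>\<eta> \<in> S\<close> by (simp add: add_increasing)
      qed
    qed
    have Sm: "S \<in> sets \<nu>" unfolding S_def using open_in_sets[OF space borel_sets, of "ball \<xi> (a*D)"]
      by (simp add: Int_commute)
    have Sm2: "Y \<inter> ball y m \<in> sets \<nu>" using open_in_sets[OF space borel_sets, of "ball y m"]
      by (simp add: Int_commute)
    have g1m: "g1 \<in> borel_measurable \<nu>" unfolding g1_def by (rule borel_to_nu[OF space borel_sets rpow0_meas])
    have g2m: "g2 \<in> borel_measurable \<nu>" unfolding g2_def by (rule borel_to_nu[OF space borel_sets rpow0_meas])
    have f1m: "f1 \<in> borel_measurable \<nu>" unfolding f1_def
      by (intro borel_measurable_times_ennreal borel_measurable_const borel_measurable_indicator Sm g1m)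
    have f2m: "f2 \<in> borel_measurable \<nu>" unfolding f2_def
      by (intro borel_measurable_times_ennreal borel_measurable_const borel_measurable_indicator Sm2 g2m)
    have I1: "integral\<^sup>N \<nu> f1 \<le> ennreal k1 * ennreal (Kf s1 * (a * D) powr (vY - s1))"
    proof -
      have "integral\<^sup>N \<nu> f1 = ennreal k1 * (\<integral>\<^sup>+\<eta>\<in>(Y \<inter> ball \<xi> (a * D)). g1 \<eta> \<partial>\<nu>)"
        unfolding f1_def S_def by (rule nn_integral_cmult) (use g1m Sm[unfolded S_def] in simp)
      also have "\<dots> \<le> ennreal k1 * ennreal (Kf s1 * (a * D) powr (vY - s1))"
        unfolding g1_def by (intro mult_left_mono BI) (use s1 \<xi>Y a_pos D in auto)
      finally show ?thesis .
    qed
    have I2: "integral\<^sup>N \<nu> f2 \<le> ennreal k2 * ennreal (Kf s2 * m powr (vY - s2))"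
    proof -
      have "integral\<^sup>N \<nu> f2 = ennreal k2 * (\<integral>\<^sup>+\<eta>\<in>(Y \<inter> ball y m). g2 \<eta> \<partial>\<nu>)"
        unfolding f2_def by (rule nn_integral_cmult) (use g2m Sm2 in simp)
      also have "\<dots> \<le> ennreal k2 * ennreal (Kf s2 * m powr (vY - s2))"
        unfolding g2_def by (intro mult_left_mono BI) (use s2 yY m in auto)
      finally show ?thesis .
    qed
    have R1: "k1 * (Kf s1 * (a * D) powr (vY - s1)) \<le> c1 * (L powr (- s2) * D powr (vY - s1))"
    proof -
      have "k1 \<le> (L/4) powr (-s2)" unfolding k1_def
        by (rule powr_mono2') (use s2 \<rho>L L D in auto)
      also have "\<dots> = 4 powr s2 * L powr (-s2)" using L D by (simp add: powr_divide powr_minus field_simps)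
      finally have "k1 \<le> 4 powr s2 * L powr (-s2)" .
      hence "k1 * (Kf s1 * (a * D) powr (vY - s1)) \<le> 4 powr s2 * L powr (-s2) * (Kf s1 * (a * D) powr (vY - s1))"
        using Kf_pos[OF s1(2)] by (intro mult_right_mono) auto
      also have "\<dots> = c1 * (L powr (- s2) * D powr (vY - s1))"
        unfolding c1_def using a_pos D by (simp add: powr_mult)
      finally show ?thesis .
    qed
    have R2: "k2 * (Kf s2 * m powr (vY - s2)) \<le> c2 * (L powr (- s1) * D powr (vY - s2))"
    proof -
      have "k2 \<le> (L/4) powr (-s1)" unfolding k2_def
        by (rule powr_mono2') (use s1 \<rho>L L D in auto)
      also have "\<dots> = 4 powr s1 * L powr (-s1)" using L D by (simp add: powr_divide powr_minus field_simps)
      finally have kk: "k2 \<le> 4 powr s1 * L powr (-s1)" .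
      have mm: "m powr (vY - s2) \<le> (a * D) powr (vY - s2)"
        by (rule powr_mono2) (use m s2 in auto)
      have "k2 * (Kf s2 * m powr (vY - s2)) \<le> 4 powr s1 * L powr (-s1) * (Kf s2 * (a * D) powr (vY - s2))"
        using Kf_pos[OF s2(2)] kk mm by (intro mult_mono mult_left_mono) (auto simp: k2_def)
      also have "\<dots> = c2 * (L powr (- s1) * D powr (vY - s2))"
        unfolding c2_def using a_pos D by (simp add: powr_mult)
      finally show ?thesis .
    qed
    have k1p: "0 \<le> k1" and k2p: "0 \<le> k2" unfolding k1_def k2_def by auto
    have "(\<integral>\<^sup>+ \<eta>\<in>S. kernel \<xi> y s1 s2 \<eta> \<partial>\<nu>) \<le> (\<integral>\<^sup>+ \<eta>. f1 \<eta> + f2 \<eta> \<partial>\<nu>)"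
      by (intro nn_integral_mono point)
    also have "\<dots> = integral\<^sup>N \<nu> f1 + integral\<^sup>N \<nu> f2" by (rule nn_integral_add[OF f1m f2m])
    also have "\<dots> \<le> ennreal k1 * ennreal (Kf s1 * (a * D) powr (vY - s1)) + ennreal k2 * ennreal (Kf s2 * m powr (vY - s2))"
      by (intro add_mono I1 I2)
    also have "\<dots> = ennreal (k1 * (Kf s1 * (a * D) powr (vY - s1))) + ennreal (k2 * (Kf s2 * m powr (vY - s2)))"
      using k1p k2p Kf_pos[OF s1(2)] Kf_pos[OF s2(2)] by (simp add: ennreal_mult)
    also have "\<dots> = ennreal (k1 * (Kf s1 * (a * D) powr (vY - s1)) + k2 * (Kf s2 * m powr (vY - s2)))"
      using k1p k2p Kf_pos[OF s1(2)] Kf_pos[OF s2(2)] by (intro ennreal_plus[symmetric]) auto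
    also have "\<dots> \<le> ennreal (c1 * (L powr (- s2) * D powr (vY - s1)) + c2 * (L powr (- s1) * D powr (vY - s2)))"
      by (intro ennreal_leI add_mono R1 R2)
    also have "\<dots> \<le> ennreal ((c1 + c2) * (L powr (- s2) * D powr (vY - s1) + L powr (- s1) * D powr (vY - s2)))"
      using c1 c2 by (intro ennreal_leI sum_le_aux) auto
    finally show "(\<integral>\<^sup>+ \<eta>\<in>(Y \<inter> ball \<xi> (a * dist x' x'')). kernel \<xi> y s1 s2 \<eta> \<partial>\<nu>)
              \<le> ennreal ((c1 + c2) * (dist x' y powr (- s2) * dist x' x'' powr (vY - s1)
                             + dist x' y powr (- s1) * dist x' x'' powr (vY - s2)))"
      unfolding S_def D_def L_def .
  qed
qed

end
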